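(* Consider algorithm DIST-OPT as described in the context (with arbitrary step size $\gamma>0$ and arbitrary problem data), and use the convention $\lambda_j(s)=0$ for $s\le 0$. (a) If all delays are zero ($\tau^{\uparrow}_j(t)=\tau^{\downarrow}_j(t)=0$ for all $j,t$), then for all $i\in\mathcal N$ and $t\in\mathbb N$, $$z_i^P(t)=\sum_{j=1}^N R_{ij}\lambda_j(t-d_{ij}),\qquad z_i^Q(t)=\sum_{j=1}^N X_{ij}\lambda_j(t-d_{ij}),$$ where $d_{ij}=0$ if $\texttt{dist}(i,j)\le1$ and $d_{ij}=\texttt{dist}(i,j)-1$ otherwise. (b) If all delays are bounded by $\tau_{\max}$, then for all $i\in\mathcal N$ and $t\in\mathbb N$ there exist integers $0\le\bar\tau_{ij}(t)\le(\tau_{\max}+1)d$ such that $$z_i^P(t)=\sum_{j=1}^N R_{ij}\lambda_j(t-\bar\tau_{ij}(t)),\qquad z_i^Q(t)=\sum_{j=1}^N X_{ij}\lambda_j(t-\bar\tau_{ij}(t)).$$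
   Context: Network: a radial network is a tree on nodes $\{0,1,\dots,N\}$ rooted at node $0$; $\mathcal N=\{1,\dots,N\}$. Each $i\in\mathcal N$ has a unique parent $\sigma_i\in\{0,\dots,N\}$. Each edge $(h,k)$ ($h$ the parent of $k$) has resistance $r_{hk}\ge0$ and reactance $x_{hk}\ge0$. $\mathcal P_i$ is the set of edges on the path from $0$ to $i$. Define $N\times N$ matrices $R_{ij}=2\sum_{(h,k)\in\mathcal P_i\cap\mathcal P_j}r_{hk}$ and $X_{ij}=2\sum_{(h,k)\in\mathcal P_i\cap\mathcal P_j}x_{hk}$. $\texttt{dist}(i,j)$ is the number of edges on the tree path between $i$ and $j$, and $d=\max_{i,j\in\mathcal N}\texttt{dist}(i,j)$. Voltage model: $v(p,q)=Rp+Xq+v_0\mathbf 1\in\mathbb R^N$ for a fixed $v_0\in\mathbb R$. Problem data: vectors $\underline v\le\bar v$, $\underline p\le\bar p$, $\underline q\le\bar q$ in $\mathbb R^N$ and reals $a_i^{P},a_i^{Q}>0$, $b_i^P,b_i^Q$. Algorithm DIST-OPT. For $i\in\mathcal N$, the algorithmic parent of $i$ is $\sigma_i$ if $\sigma_i\neq0$; if $\sigma_i=0$, $i$ has no algorithmic parent. Let $\mathcal C_i=\{j\in\mathcal N:\sigma_j=i\}$. For each $j\in\mathcal N$ having an algorithmic parent and each $t\in\mathbb N$, there are delays $\tau^{\uparrow}_j(t),\tau^{\downarrow}_j(t)\in\mathbb Z_{\ge0}$. Write $[x]_a^b=\min(\max(x,a),b)$ and $\lceil x\rceil_+=\max(x,0)$.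 Initialization ($t=0$): for all $i\in\mathcal N$, $z_i^P(0)=z_i^Q(0)=\underline\lambda_i(0)=\bar\lambda_i(0)=\lambda_i(0)=0$ and $\alpha_i(0)=\beta_i^P(0)=\beta_i^Q(0)=\hat\alpha_i(0)=\hat\beta_i^P(0)=\hat\beta_i^Q(0)=0$; any message $\alpha_i(s),\beta_i^P(s),\beta_i^Q(s)$ with $s<0$ is $0$; if $i$ has no algorithmic parent then $\hat\beta_i^P(t)=\hat\beta_i^Q(t)=0$ for all $t$. For $t=0,1,2,\dots$ and every $i\in\mathcal N$: (1) $p_i(t)=\bigl[(z_i^P(t)-b_i^P)/a_i^P\bigr]_{\underline p_i}^{\bar p_i}$ and $q_i(t)=\bigl[(z_i^Q(t)-b_i^Q)/a_i^Q\bigr]_{\underline q_i}^{\bar q_i}$. (2) $v(t)=v(p(t),q(t))$; $\underline\lambda_i(t+1)=\lceil\underline\lambda_i(t)+\gamma(\underline v_i-v_i(t))\rceil_+$, $\bar\lambda_i(t+1)=\lceil\bar\lambda_i(t)+\gamma(v_i(t)-\bar v_i)\rceil_+$, $\lambda_i(t+1)=\underline\lambda_i(t+1)-\bar\lambda_i(t+1)$, with step size $\gamma>0$. (3) $\alpha_i(t+1)=\lambda_i(t+1)+\sum_{j\in\mathcal C_i}\hat\alpha_j(t)$, and for each $j\in\mathcal C_i$: $\beta_j^P(t+1)=R_{ii}\bigl(\lambda_i(t+1)+\sum_{r\in\mathcal C_i\setminus\{j\}}\hat\alpha_r(t)\bigr)+\hat\beta_i^P(t)$ and $\beta_j^Q(t+1)=X_{ii}\bigl(\lambda_i(t+1)+\sum_{r\in\mathcal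 C_i\setminus\{j\}}\hat\alpha_r(t)\bigr)+\hat\beta_i^Q(t)$. For each $j$ with an algorithmic parent: $\hat\alpha_j(t+1)=\alpha_j(t+1-\tau^{\uparrow}_j(t))$, $\hat\beta_j^P(t+1)=\beta_j^P(t+1-\tau^{\downarrow}_j(t))$, $\hat\beta_j^Q(t+1)=\beta_j^Q(t+1-\tau^{\downarrow}_j(t))$. (4) $z_i^P(t+1)=R_{ii}\bigl(\lambda_i(t+1)+\sum_{j\in\mathcal C_i}\hat\alpha_j(t+1)\bigr)+\hat\beta_i^P(t+1)$ and $z_i^Q(t+1)=X_{ii}\bigl(\lambda_i(t+1)+\sum_{j\in\mathcal C_i}\hat\alpha_j(t+1)\bigr)+\hat\beta_i^Q(t+1)$. *)

theory Defs
  imports Complex_Main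
begin

text \<open>Nodes are 0..N, node 0 is the root. The edge (sigma k, k) is identified with its
 child endpoint k; rr k and xx k are its resistance and reactance.\<close>

record prob =
  nodes :: nat
  sigma :: "nat \<Rightarrow> nat"
  rr    :: "nat \<Rightarrow> real"
  xx    :: "nat \<Rightarrow> real"
  vnom  :: real
  vlo   :: "nat \<Rightarrow> real"
  vhi   :: "nat \<Rightarrow> real"
  plo   :: "nat \<Rightarrow> real"
  phi   :: "nat \<Rightarrow> real"
  qlo   :: "nat \<Rightarrow> real"
  qhi   :: "nat \<Rightarrow> real"
  aP    :: "nat \<Rightarrow> real"
  aQ    :: "nat \<Rightarrow> real"
  bP    :: "nat \<Rightarrow> real"
  bQ    :: "nat \<Rightarrow> real"
  gam   :: real
  tup   :: "nat \<Rightarrow> nat \<Rightarrow> nat"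
  tdn   :: "nat \<Rightarrow> nat \<Rightarrow> nat"

definition is_tree :: "nat \<Rightarrow> (nat \<Rightarrow> nat) \<Rightarrow> bool" where
  "is_tree n \<sigma> \<longleftrightarrow> (\<forall>i\<in>{1..n}. \<sigma> i \<le> n \<and> (\<exists>m. (\<sigma> ^^ m) i = 0))"

definition depth :: "(nat \<Rightarrow> nat) \<Rightarrow> nat \<Rightarrow> nat" where
  "depth \<sigma> i = (LEAST m. (\<sigma> ^^ m) i = 0)"

definition pathE :: "(nat \<Rightarrow> nat) \<Rightarrow> nat \<Rightarrow> nat set" where
  "pathE \<sigma> i = {(\<sigma> ^^ m) i | m. m < depth \<sigma> i}"

definition Rm :: "prob \<Rightarrow> nat \<Rightarrow> nat \<Rightarrow> real" where
  "Rm D i j = 2 * (\<Sum>k \<in> pathE (sigma D) i \<inter> pathE (sigma D) j. rr D k)"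

definition Xm :: "prob \<Rightarrow> nat \<Rightarrow> nat \<Rightarrow> real" where
  "Xm D i j = 2 * (\<Sum>k \<in> pathE (sigma D) i \<inter> pathE (sigma D) j. xx D k)"

text \<open>Number of edges on the tree path between i and j: the symmetric difference of
 the root paths.\<close>
definition tdist :: "prob \<Rightarrow> nat \<Rightarrow> nat \<Rightarrow> nat" where
  "tdist D i j = card (pathE (sigma D) i - pathE (sigma D) j)
               + card (pathE (sigma D) j - pathE (sigma D) i)"

definition diam :: "prob \<Rightarrow> nat" where
  "diam D = Max {tdist D i j | i j. i \<in> {1..nodes D} \<and> j \<in> {1..nodes D}}"

definition children :: "prob \<Rightarrow> nat \<Rightarrow> nat set" where
  "children D i = {j \<in> {1..nodes D}. sigma D j = i}"

record st =
  zP    :: "nat \<Rightarrow> real"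
  zQ    :: "nat \<Rightarrow> real"
  lamL  :: "nat \<Rightarrow> real"
  lamU  :: "nat \<Rightarrow> real"
  lam   :: "nat \<Rightarrow> real"
  alpha :: "nat \<Rightarrow> real"
  betaP :: "nat \<Rightarrow> real"
  betaQ :: "nat \<Rightarrow> real"
  ahat  :: "nat \<Rightarrow> real"
  bPhat :: "nat \<Rightarrow> real"
  bQhat :: "nat \<Rightarrow> real"

definition st0 :: st where
  "st0 = \<lparr>zP = (\<lambda>_. 0), zQ = (\<lambda>_. 0), lamL = (\<lambda>_. 0), lamU = (\<lambda>_. 0),
          lam = (\<lambda>_. 0), alpha = (\<lambda>_. 0), betaP = (\<lambda>_. 0), betaQ = (\<lambda>_. 0),
          ahat = (\<lambda>_. 0), bPhat = (\<lambda>_. 0), bQhat = (\<lambda>_. 0)\<rparr>"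

definition clamp :: "real \<Rightarrow> real \<Rightarrow> real \<Rightarrow> real" where
  "clamp lo hi x = min (max x lo) hi"

text \<open>One iteration: given the history H (H s is the state at time s, for s \<le> t),
 compute the state at time t+1.\<close>
definition step :: "prob \<Rightarrow> (nat \<Rightarrow> st) \<Rightarrow> nat \<Rightarrow> st" where
  "step D H t = (let
     cur = H t; n = nodes D; \<sigma> = sigma D;
     p = (\<lambda>i. clamp (plo D i) (phi D i) ((zP cur i - bP D i) / aP D i));
     q = (\<lambda>i. clamp (qlo D i) (qhi D i) ((zQ cur i - bQ D i) / aQ D i));
     v = (\<lambda>i. (\<Sum>j=1..n. Rm D i j * p j + Xm D i j * q j) + vnom D);
     lL = (\<lambda>i. max (lamL cur i + gam D * (vlo D i - v i)) 0);
     lU = (\<lambda>i. max (lamU cur i + gam D * (v i - vhi D i)) 0);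
     l = (\<lambda>i. lL i - lU i);
     a = (\<lambda>i. l i + (\<Sum>j\<in>children D i. ahat cur j));
     bp = (\<lambda>j. if \<sigma> j \<noteq> 0 then
             Rm D (\<sigma> j) (\<sigma> j) * (l (\<sigma> j) + (\<Sum>r\<in>children D (\<sigma> j) - {j}. ahat cur r))
               + bPhat cur (\<sigma> j) else 0);
     bq = (\<lambda>j. if \<sigma> j \<noteq> 0 then
             Xm D (\<sigma> j) (\<sigma> j) * (l (\<sigma> j) + (\<Sum>r\<in>children D (\<sigma> j) - {j}. ahat cur r))
               + bQhat cur (\<sigma> j) else 0);
     mid = cur\<lparr>lamL := lL, lamU := lU, lam := l, alpha := a, betaP := bp, betaQ := bq\<rparr>;
     H' = H(Suc t := mid);
     ah = (\<lambda>j. if \<sigma> j \<noteq> 0 then alpha (H' (Suc t - tup D j t)) j else 0);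
     bph = (\<lambda>j. if \<sigma> j \<noteq> 0 then betaP (H' (Suc t - tdn D j t)) j else 0);
     bqh = (\<lambda>j. if \<sigma> j \<noteq> 0 then betaQ (H' (Suc t - tdn D j t)) j else 0);
     zp = (\<lambda>i. Rm D i i * (l i + (\<Sum>j\<in>children D i. ah j)) + bph i);
     zq = (\<lambda>i. Xm D i i * (l i + (\<Sum>j\<in>children D i. ah j)) + bqh i)
   in mid\<lparr>zP := zp, zQ := zq, ahat := ah, bPhat := bph, bQhat := bqh\<rparr>)"

fun run :: "prob \<Rightarrow> nat \<Rightarrow> (nat \<Rightarrow> st)" where
  "run D 0 = (\<lambda>_. st0)"
| "run D (Suc t) = (run D t)(Suc t := step D (run D t) t)"

definition state :: "prob \<Rightarrow> nat \<Rightarrow> st" where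
  "state D t = run D t t"

definition dd :: "prob \<Rightarrow> nat \<Rightarrow> nat \<Rightarrow> nat" where
  "dd D i j = (if tdist D i j \<le> 1 then 0 else tdist D i j - 1)"

end

theory Submission
  imports Defs
begin


lemma run_le: "s \<le> t \<Longrightarrow> run D t s = state D s"
proof (induction t arbitrary: s)
  case 0 then show ?case by (simp add: state_def)
next
  case (Suc t) then show ?case
    by (cases "s = Suc t") (auto simp: state_def)
qed

lemma state_Suc: "state D (Suc t) = step D (run D t) t" by (simp add: state_def)

lemma run_t: "run D t t = state D t" by (simp add: state_def)

lemma alpha_Suc: "alpha (state D (Suc t)) i = lam (state D (Suc t)) i + (\<Sum>j\<in>children D i. ahat (state D t) j)"
  by (simp add: state_Suc step_def Let_def run_t)

lemma ahat_Suc: "ahat (state D (Suc t)) j = (if sigma D j \<noteq> 0 then alpha (state D (Suc t - tup D j t)) j else 0)"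
  apply (cases "tup D j t = 0")
  apply (simp add: state_Suc step_def Let_def run_t)
  apply (simp add: state_Suc step_def Let_def run_le)
  done

lemma betaP_Suc: "betaP (state D (Suc t)) j = (if sigma D j \<noteq> 0 then
   Rm D (sigma D j) (sigma D j) * (lam (state D (Suc t)) (sigma D j) + (\<Sum>r\<in>children D (sigma D j) - {j}. ahat (state D t) r)) + bPhat (state D t) (sigma D j) else 0)"
  by (simp add: state_Suc step_def Let_def run_t)

lemma betaQ_Suc: "betaQ (state D (Suc t)) j = (if sigma D j \<noteq> 0 then
   Xm D (sigma D j) (sigma D j) * (lam (state D (Suc t)) (sigma D j) + (\<Sum>r\<in>children D (sigma D j) - {j}. ahat (state D t) r)) + bQhat (state D t) (sigma D j) else 0)"
  by (simp add: state_Suc step_def Let_def run_t)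

lemma bPhat_Suc: "bPhat (state D (Suc t)) j = (if sigma D j \<noteq> 0 then betaP (state D (Suc t - tdn D j t)) j else 0)"
  apply (cases "tdn D j t = 0")
  apply (simp add: state_Suc step_def Let_def run_t)
  apply (simp add: state_Suc step_def Let_def run_le)
  done

lemma bQhat_Suc: "bQhat (state D (Suc t)) j = (if sigma D j \<noteq> 0 then betaQ (state D (Suc t - tdn D j t)) j else 0)"
  apply (cases "tdn D j t = 0")
  apply (simp add: state_Suc step_def Let_def run_t)
  apply (simp add: state_Suc step_def Let_def run_le)
  done

lemma zP_Suc: "zP (state D (Suc t)) i = Rm D i i * (lam (state D (Suc t)) i + (\<Sum>j\<in>children D i. ahat (state D (Suc t)) j)) + bPhat (state D (Suc t)) i"
  by (simp add: state_Suc step_def Let_def run_t)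

lemma zQ_Suc: "zQ (state D (Suc t)) i = Xm D i i * (lam (state D (Suc t)) i + (\<Sum>j\<in>children D i. ahat (state D (Suc t)) j)) + bQhat (state D (Suc t)) i"
  by (simp add: state_Suc step_def Let_def run_t)

lemma state0: "state D 0 = st0" by (simp add: state_def)




definition childOn :: "prob \<Rightarrow> nat \<Rightarrow> nat \<Rightarrow> nat" where
  "childOn D i k = the_elem (children D i \<inter> pathE (sigma D) k)"

locale tr =
  fixes D :: prob
  assumes tree: "is_tree (nodes D) (sigma D)"
begin

abbreviation "V \<equiv> {1..nodes D}"
abbreviation "sg \<equiv> sigma D"
abbreviation "PE \<equiv> pathE (sigma D)"
abbreviation "ch \<equiv> children D"

lemma par: "i \<in> V \<Longrightarrow> sg i = 0 \<or> sg i \<in> V"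
  using tree unfolding is_tree_def by force

lemma depth_Suc: assumes "i \<in> V" shows "depth sg i = Suc (depth sg (sg i))"
proof -
  obtain m where m: "(sg ^^ m) i = 0" using tree assms unfolding is_tree_def by blast
  have "i \<noteq> 0" using assms by auto
  have "(LEAST m. (sg ^^ m) i = 0) = Suc (LEAST m. (sg ^^ Suc m) i = 0)"
    by (rule Least_Suc[of "\<lambda>m. (sg ^^ m) i = 0", OF m]) (simp add: \<open>i \<noteq> 0\<close>)
  moreover have "\<And>m. (sg ^^ Suc m) i = (sg ^^ m) (sg i)" by (simp add: funpow_swap1)
  ultimately show ?thesis unfolding depth_def by simp
qed

lemma depth0: "depth sg 0 = 0" by (simp add: depth_def)

lemma pathE0: "PE 0 = {}" by (simp add: pathE_def depth0)

lemma pathE_Suc: assumes "i \<in> V" shows "PE i = insert i (PE (sg i))"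
proof -
  have e: "\<And>m. (sg ^^ Suc m) i = (sg ^^ m) (sg i)" by (simp add: funpow_swap1)
  show ?thesis unfolding pathE_def depth_Suc[OF assms]
  proof (intro equalityI subsetI)
    fix x assume "x \<in> {(sg ^^ m) i |m. m < Suc (depth sg (sg i))}"
    then obtain m where "x = (sg ^^ m) i" "m < Suc (depth sg (sg i))" by blast
    then show "x \<in> insert i {(sg ^^ m) (sg i) |m. m < depth sg (sg i)}"
      by (cases m) (auto simp: e simp del: funpow.simps)
  next
    fix x assume "x \<in> insert i {(sg ^^ m) (sg i) |m. m < depth sg (sg i)}"
    then show "x \<in> {(sg ^^ m) i |m. m < Suc (depth sg (sg i))}"
    proof
      assume "x = i" then show ?thesis by (intro CollectI exI[of _ 0]) auto
    next
      assume "x \<in> {(sg ^^ m) (sg i) |m. m < depth sg (sg i)}"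
      then obtain m where "x = (sg ^^ m) (sg i)" "m < depth sg (sg i)" by blast
      then show ?thesis by (intro CollectI exI[of _ "Suc m"]) (simp only: e, simp)
    qed
  qed
qed

lemma tree_induct:
  assumes "Q 0" "\<And>i. i \<in> V \<Longrightarrow> Q (sg i) \<Longrightarrow> Q i" "i \<in> V"
  shows "Q i"
  using assms(3)
proof (induction "depth sg i" arbitrary: i rule: less_induct)
  case less
  show ?case
  proof (cases "sg i = 0")
    case True then show ?thesis using assms(1,2) less.prems by simp
  next
    case False
    then have "sg i \<in> V" using par[OF less.prems] by metis
    moreover have "depth sg (sg i) < depth sg i" using depth_Suc[OF less.prems] by simp
    ultimately show ?thesis using less assms(2) by blast
  qed
qed

lemma tree_induct2[consumes 1]:
  assumes "i \<in> V" "\<And>i. i \<in> V \<Longrightarrow> (sg i \<in> V \<Longrightarrow> Q (sg i)) \<Longrightarrow> Q i"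
  shows "Q i"
proof -
  have "i \<in> V \<longrightarrow> Q i"
  proof (rule tree_induct[of "\<lambda>i. i \<in> V \<longrightarrow> Q i"])
    show "0 \<in> V \<longrightarrow> Q 0" by simp
  next
    fix k assume "k \<in> V" "sg k \<in> V \<longrightarrow> Q (sg k)"
    then show "k \<in> V \<longrightarrow> Q k" using assms(2)[of k] by blast
  next
    show "i \<in> V" by (rule assms(1))
  qed
  then show ?thesis using assms(1) by simp
qed

lemma par_nz: assumes "i \<in> V" "j \<in> PE (sg i)" shows "sg i \<in> V"
proof (cases "sg i = 0")
  case True
  then have "PE (sg i) = {}" using pathE0 by simp
  then show ?thesis using assms(2) by simp
next
  case False then show ?thesis using par[OF assms(1)] by simp
qed

lemma pathE_V: "i \<in> V \<Longrightarrow> PE i \<subseteq> V"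
proof (induction i rule: tree_induct2)
  case (1 i)
  show ?case
  proof
    fix j assume j: "j \<in> PE i"
    show "j \<in> V"
    proof (cases "j = i")
      case False
      then have j2: "j \<in> PE (sg i)" using j pathE_Suc[OF 1(1)] by simp
      then show ?thesis using 1 par_nz[OF 1(1) j2] by blast
    qed (use 1 in simp)
  qed
qed

lemma finite_PE: assumes "i \<in> V" shows "finite (PE i)"
  by (rule finite_subset[OF pathE_V[OF assms]]) simp

lemma self_PE: "i \<in> V \<Longrightarrow> i \<in> PE i" by (simp add: pathE_Suc)

lemma depth_le_aux: "i \<in> V \<Longrightarrow> \<forall>j\<in>PE i. depth sg j \<le> depth sg i"
proof (induction i rule: tree_induct2)
  case (1 i)
  show ?case
  proof
    fix j assume j: "j \<in> PE i"
    show "depth sg j \<le> depth sg i"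
    proof (cases "j = i")
      case False
      then have j2: "j \<in> PE (sg i)" using j pathE_Suc[OF 1(1)] by simp
      then have "sg i \<in> V" using par_nz[OF 1(1)] by blast
      then have "depth sg j \<le> depth sg (sg i)" using 1(2) j2 by blast
      then show ?thesis using depth_Suc[OF 1(1)] by simp
    qed simp
  qed
qed

lemma depth_le: "i \<in> V \<Longrightarrow> j \<in> PE i \<Longrightarrow> depth sg j \<le> depth sg i"
  using depth_le_aux by blast

lemma notin_par: assumes "i \<in> V" shows "i \<notin> PE (sg i)"
proof
  assume a: "i \<in> PE (sg i)"
  then have "sg i \<in> V" using par_nz assms by blast
  then have "depth sg i \<le> depth sg (sg i)" using depth_le a by blast
  then show False using depth_Suc[OF assms] by simp
qed

lemma anc_sub_aux: "k \<in> V \<Longrightarrow> \<forall>i\<in>PE k. PE i \<subseteq> PE k"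
proof (induction k rule: tree_induct2)
  case (1 k)
  show ?case
  proof
    fix i assume i: "i \<in> PE k"
    show "PE i \<subseteq> PE k"
    proof (cases "i = k")
      case False
      then have i2: "i \<in> PE (sg k)" using i pathE_Suc[OF 1(1)] by simp
      have "sg k \<in> V" using par_nz[OF 1(1) i2] .
      then have "PE i \<subseteq> PE (sg k)" using 1(2) i2 by blast
      then show ?thesis using pathE_Suc[OF 1(1)] by blast
    qed simp
  qed
qed

lemma anc_sub: "k \<in> V \<Longrightarrow> i \<in> PE k \<Longrightarrow> PE i \<subseteq> PE k"
  using anc_sub_aux by blast

lemma mem_V: "k \<in> V \<Longrightarrow> i \<in> PE k \<Longrightarrow> i \<in> V"
  using pathE_V[of k] by (rule subsetD)

lemma ch_V: "ch i \<subseteq> V" unfolding children_def by (rule subsetI) simp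
lemma finite_ch: "finite (ch i)" by (rule finite_subset[OF ch_V]) simp

lemma C1_aux: assumes iV: "i \<in> V" shows "k \<in> V \<Longrightarrow> (i \<in> PE k \<and> i \<noteq> k \<longrightarrow> (\<exists>j. ch i \<inter> PE k = {j}))
     \<and> (\<not>(i \<in> PE k \<and> i \<noteq> k) \<longrightarrow> ch i \<inter> PE k = {})"
proof (induction k rule: tree_induct2)
  case (1 k)
  have pk: "PE k = insert k (PE (sg k))" using pathE_Suc[OF 1(1)] by simp
  have kn: "k \<notin> PE (sg k)" using notin_par[OF 1(1)] by simp
  have kch: "k \<in> ch i \<longleftrightarrow> sg k = i" using 1(1) by (auto simp: children_def)
  have IH: "(i \<in> PE (sg k) \<and> i \<noteq> sg k \<longrightarrow> (\<exists>j. ch i \<inter> PE (sg k) = {j}))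
     \<and> (\<not>(i \<in> PE (sg k) \<and> i \<noteq> sg k) \<longrightarrow> ch i \<inter> PE (sg k) = {})"
  proof (cases "sg k = 0")
    case True then show ?thesis by (simp add: pathE0)
  next
    case False then have "sg k \<in> V" using par[OF 1(1)] by metis
    then show ?thesis using 1(2) by blast
  qed
  show ?case
  proof (cases "sg k = i")
    case True
    then have "ch i \<inter> PE (sg k) = {}" using IH by simp
    then have "ch i \<inter> PE k = {k}" using pk kch True by simp
    moreover have "i \<in> PE (sg k)" using True self_PE[OF iV] by simp
    moreover have "i \<in> PE k" "i \<noteq> k" using True pk kn calculation(2) by auto
    ultimately show ?thesis by blast
  next
    case False
    then have "ch i \<inter> PE k = ch i \<inter> PE (sg k)" using pk kch by auto
    moreover have "(i \<in> PE k \<and> i \<noteq> k) \<longleftrightarrow> (i \<in> PE (sg k) \<and> i \<noteq> sg k)"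
      using pk kn False by auto
    ultimately show ?thesis using IH by simp
  qed
qed

lemma C1: assumes "i \<in> V" "k \<in> V"
  shows "ch i \<inter> PE k = (if i \<in> PE k \<and> i \<noteq> k then {childOn D i k} else {})"
proof (cases "i \<in> PE k \<and> i \<noteq> k")
  case True
  then obtain j where j: "ch i \<inter> PE k = {j}" using C1_aux[OF assms(1) assms(2)] by blast
  then have "childOn D i k = j" unfolding childOn_def by simp
  then show ?thesis using j True by simp
next
  case False then show ?thesis using C1_aux[OF assms(1) assms(2)] by simp
qed

lemma childOn: assumes "i \<in> V" "k \<in> V" "i \<in> PE k" "i \<noteq> k"
  shows "childOn D i k \<in> ch i" "childOn D i k \<in> PE k" "sg (childOn D i k) = i" "childOn D i k \<in> V"
proof -
  have e: "ch i \<inter> PE k = {childOn D i k}" using C1[OF assms(1,2)] assms(3,4) by simp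
  show 1: "childOn D i k \<in> ch i" using e by blast
  show "childOn D i k \<in> PE k" using e by blast
  show "sg (childOn D i k) = i" using 1 unfolding children_def by simp
  show "childOn D i k \<in> V" using 1 ch_V by blast
qed

lemma sum_ch: assumes "i \<in> V" "k \<in> V"
  shows "(\<Sum>j\<in>ch i. if j \<in> PE k then g j else 0) = (if i \<in> PE k \<and> i \<noteq> k then g (childOn D i k) else (0::real))"
proof -
  have "(\<Sum>j\<in>ch i. if j \<in> PE k then g j else 0) = sum g (ch i \<inter> PE k)"
    by (rule sum.inter_restrict[OF finite_ch, symmetric])
  then show ?thesis using C1[OF assms] by simp
qed

end



definition Wt :: "(nat \<Rightarrow> real) \<Rightarrow> prob \<Rightarrow> nat \<Rightarrow> nat \<Rightarrow> real" where
  "Wt f D i k = 2 * (\<Sum>x\<in>pathE (sigma D) i \<inter> pathE (sigma D) k. f x)"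

lemma Rm_Wt: "Rm D = Wt (rr D) D" by (simp add: fun_eq_iff Rm_def Wt_def)
lemma Xm_Wt: "Xm D = Wt (xx D) D" by (simp add: fun_eq_iff Xm_def Wt_def)

context tr begin

lemma D1: assumes "i \<in> V" "k \<in> V" "j \<in> ch i" "j \<in> PE k"
  shows "tdist D i k = Suc (tdist D j k)"
proof -
  have jV: "j \<in> V" using assms(3) ch_V by blast
  have sj: "sg j = i" using assms(3) by (simp add: children_def)
  have pj: "PE j = insert j (PE i)" using pathE_Suc[OF jV] sj by simp
  have jn: "j \<notin> PE i" using notin_par[OF jV] sj by simp
  have sub: "PE j \<subseteq> PE k" using anc_sub[OF assms(2,4)] .
  have f: "finite (PE k)" using finite_PE[OF assms(2)] .
  have e1: "PE j - PE k = {}" "PE i - PE k = {}" using sub pj by auto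
  have e2: "PE k - PE i = insert j (PE k - PE j)" using pj assms(4) jn by auto
  have "card (PE k - PE i) = Suc (card (PE k - PE j))"
    unfolding e2 by (rule card_insert_disjoint) (use f pj in auto)
  then show ?thesis unfolding tdist_def e1 by simp
qed

lemma D2: assumes "i \<in> V" "sg i \<in> V" "k \<in> V" "i \<notin> PE k"
  shows "tdist D i k = Suc (tdist D (sg i) k)"
proof -
  have pi: "PE i = insert i (PE (sg i))" using pathE_Suc[OF assms(1)] .
  have jn: "i \<notin> PE (sg i)" using notin_par[OF assms(1)] .
  have f: "finite (PE (sg i))" using finite_PE[OF assms(2)] .
  have e1: "PE i - PE k = insert i (PE (sg i) - PE k)" using pi assms(4) by auto
  have e2: "PE k - PE i = PE k - PE (sg i)" using pi assms(4) by auto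
  have "card (PE i - PE k) = Suc (card (PE (sg i) - PE k))"
    unfolding e1 by (rule card_insert_disjoint) (use f jn in auto)
  then show ?thesis unfolding tdist_def e2 by simp
qed

lemma D3: "tdist D i i = 0" by (simp add: tdist_def)

lemma D4: assumes "i \<in> V" "i \<notin> PE k" shows "1 \<le> tdist D i k"
proof -
  have "i \<in> PE i - PE k" using self_PE[OF assms(1)] assms(2) by simp
  moreover have "finite (PE i - PE k)" using finite_PE[OF assms(1)] by simp
  ultimately have "card (PE i - PE k) > 0" using card_gt_0_iff by blast
  then show ?thesis unfolding tdist_def by simp
qed

lemma D5: assumes "i \<in> V" "k \<in> V" shows "tdist D i k \<le> diam D"
proof -
  have "finite {tdist D i j | i j. i \<in> V \<and> j \<in> V}" by (rule finite_image_set2) simp_all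
  moreover have "tdist D i k \<in> {tdist D i j | i j. i \<in> V \<and> j \<in> V}" using assms by blast
  ultimately show ?thesis unfolding diam_def by (rule Max_ge)
qed

lemma W1: assumes "k \<in> V" "i \<in> PE k" shows "Wt f D i k = Wt f D i i"
proof -
  have "PE i \<subseteq> PE k" using anc_sub[OF assms] .
  then have "PE i \<inter> PE k = PE i \<inter> PE i" by auto
  then show ?thesis unfolding Wt_def by simp
qed

lemma W2: assumes "i \<in> V" "i \<notin> PE k" shows "Wt f D i k = Wt f D (sg i) k"
proof -
  have "PE i \<inter> PE k = PE (sg i) \<inter> PE k" using pathE_Suc[OF assms(1)] assms(2) by auto
  then show ?thesis unfolding Wt_def by simp
qed

lemma W3: assumes "i \<in> V" "sg i = 0" "i \<notin> PE k" shows "Wt f D i k = 0"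
proof -
  have "PE i \<inter> PE k = {}" using pathE_Suc[OF assms(1)] assms(2,3) pathE0 by simp
  then show ?thesis unfolding Wt_def by simp
qed

lemma par_in: assumes "i \<in> V" "sg i \<in> V" shows "sg i \<in> PE i"
  using pathE_Suc[OF assms(1)] self_PE[OF assms(2)] by simp

end



definition okA :: "nat \<Rightarrow> bool \<Rightarrow> nat \<Rightarrow> nat \<Rightarrow> nat \<Rightarrow> bool" where
  "okA \<tau> Z d t x = (x \<le> t \<and> t - x \<le> (\<tau>+1)*d \<and> (Z \<longrightarrow> x = t - d))"
definition okH :: "nat \<Rightarrow> bool \<Rightarrow> nat \<Rightarrow> nat \<Rightarrow> nat \<Rightarrow> bool" where
  "okH \<tau> Z d t x = (x \<le> t \<and> Suc (t - x) \<le> (\<tau>+1)*d \<and> (Z \<longrightarrow> x = t - (d - 1)))"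
definition okZ :: "nat \<Rightarrow> bool \<Rightarrow> nat \<Rightarrow> nat \<Rightarrow> nat \<Rightarrow> bool" where
  "okZ \<tau> Z d t x = (x \<le> t \<and> t - x \<le> (\<tau>+1)*d \<and> (Z \<longrightarrow> x = t - (d - 1)))"

lemma okA_step: "okA \<tau> Z d t' x \<Longrightarrow> t' \<le> u \<Longrightarrow> u - t' \<le> \<tau> \<Longrightarrow> (Z \<longrightarrow> t' = u) \<Longrightarrow> okA \<tau> Z (Suc d) (Suc u) x"
proof -
  assume a: "okA \<tau> Z d t' x" "t' \<le> u" "u - t' \<le> \<tau>" "Z \<longrightarrow> t' = u"
  have m: "(\<tau>+1)*Suc d = (\<tau>+1)*d + \<tau> + 1" by simp
  show ?thesis using a unfolding okA_def m by auto
qed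

lemma okA_zero: "okA \<tau> Z 0 t t" by (simp add: okA_def)
lemma okA_0: "okA \<tau> Z d 0 0" by (simp add: okA_def)

lemma okB_H: "okH \<tau> Z d u x \<Longrightarrow> 1 \<le> d \<Longrightarrow> okA \<tau> Z d (Suc u) x"
  unfolding okH_def okA_def by auto

lemma okH_B: assumes "okA \<tau> Z (d - 1) t' x" "1 \<le> d" "t' \<le> t" "t - t' \<le> \<tau>" "Z \<longrightarrow> t' = t"
  shows "okH \<tau> Z d t x"
proof -
  obtain e where e: "d = Suc e" using assms(2) by (cases d) auto
  have m: "(\<tau>+1)*Suc e = (\<tau>+1)*e + \<tau> + 1" by simp
  show ?thesis using assms unfolding okA_def okH_def e m by auto
qed

lemma okH_canon: assumes "1 \<le> d" shows "okH \<tau> Z d t (t - (d - 1))"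
proof -
  obtain e where e: "d = Suc e" using assms by (cases d) auto
  have m: "(\<tau>+1)*Suc e = (\<tau>+1)*e + \<tau> + 1" by simp
  have "Suc (t - (t - e)) \<le> Suc e" by simp
  also have "\<dots> \<le> (\<tau>+1)*Suc e" by simp
  finally show ?thesis unfolding okH_def e by simp
qed

lemma okZ_A: "okA \<tau> Z d t' x \<Longrightarrow> t' \<le> t \<Longrightarrow> t - t' \<le> \<tau> \<Longrightarrow> (Z \<longrightarrow> t' = t) \<Longrightarrow> okZ \<tau> Z (Suc d) t x"
proof -
  assume a: "okA \<tau> Z d t' x" "t' \<le> t" "t - t' \<le> \<tau>" "Z \<longrightarrow> t' = t"
  have m: "(\<tau>+1)*Suc d = (\<tau>+1)*d + \<tau> + 1" by simp
  show ?thesis using a unfolding okA_def okZ_def m by auto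
qed

lemma okZ_H: "okH \<tau> Z d t x \<Longrightarrow> okZ \<tau> Z d t x"
  unfolding okH_def okZ_def by auto

lemma okZ_zero: "okZ \<tau> Z 0 t t" by (simp add: okZ_def)
lemma okZ_0: "okZ \<tau> Z d 0 0" by (simp add: okZ_def)




lemma st0_simps: "lam (state D 0) = (\<lambda>_. 0)" "alpha (state D 0) = (\<lambda>_. 0)" "ahat (state D 0) = (\<lambda>_. 0)"
  "betaP (state D 0) = (\<lambda>_. 0)" "betaQ (state D 0) = (\<lambda>_. 0)" "bPhat (state D 0) = (\<lambda>_. 0)" "bQhat (state D 0) = (\<lambda>_. 0)"
  "zP (state D 0) = (\<lambda>_. 0)" "zQ (state D 0) = (\<lambda>_. 0)"
  by (simp_all add: state0 st0_def)

locale dl = tr +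
  fixes \<tau> :: nat and Z :: bool
  assumes dly: "\<And>j t. j \<in> {1..nodes D} \<Longrightarrow> sigma D j \<noteq> 0 \<Longrightarrow>
     tup D j t \<le> \<tau> \<and> tdn D j t \<le> \<tau> \<and> (Z \<longrightarrow> tup D j t = 0 \<and> tdn D j t = 0)"
begin

lemma AH: assumes "j \<in> V" "sg j \<noteq> 0"
  shows "\<exists>t'\<le>t. t - t' \<le> \<tau> \<and> (Z \<longrightarrow> t' = t) \<and> ahat (state D t) j = alpha (state D t') j"
proof (cases t)
  case 0 then show ?thesis by (intro exI[of _ 0]) (simp add: st0_simps)
next
  case (Suc u)
  show ?thesis
    by (rule exI[of _ "Suc u - tup D j u"]) (use dly[OF assms, of u] in \<open>auto simp: Suc ahat_Suc assms(2)\<close>)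
qed

lemma IA: "i \<in> V \<Longrightarrow> \<exists>s. (\<forall>k\<in>V. i \<in> PE k \<longrightarrow> okA \<tau> Z (tdist D i k) t (s k)) \<and>
   alpha (state D t) i = (\<Sum>k\<in>V. if i \<in> PE k then lam (state D (s k)) k else 0)"
proof (induction t arbitrary: i rule: less_induct)
  case (less t)
  show ?case
  proof (cases t)
    case 0
    have "(\<Sum>k\<in>V. if i \<in> PE k then lam (state D 0) k else 0) = 0"
      by (rule sum.neutral) (simp add: st0_simps)
    then show ?thesis using 0 by (intro exI[of _ "\<lambda>_. 0"]) (simp add: okA_0 st0_simps)
  next
    case (Suc u)
    have ex: "\<forall>j\<in>ch i. \<exists>ts. fst ts \<le> u \<and> u - fst ts \<le> \<tau> \<and> (Z \<longrightarrow> fst ts = u) \<and>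
        ahat (state D u) j = alpha (state D (fst ts)) j \<and>
        (\<forall>k\<in>V. j \<in> PE k \<longrightarrow> okA \<tau> Z (tdist D j k) (fst ts) (snd ts k)) \<and>
        alpha (state D (fst ts)) j = (\<Sum>k\<in>V. if j \<in> PE k then lam (state D (snd ts k)) k else 0)"
    proof
      fix j assume j: "j \<in> ch i"
      have jV: "j \<in> V" using j ch_V by blast
      have sj: "sg j \<noteq> 0" using j less.prems by (simp add: children_def)
      obtain t' where t': "t' \<le> u" "u - t' \<le> \<tau>" "Z \<longrightarrow> t' = u" "ahat (state D u) j = alpha (state D t') j"
        using AH[OF jV sj, of u] by blast
      have "t' < t" using t' Suc by simp
      then obtain s where s: "(\<forall>k\<in>V. j \<in> PE k \<longrightarrow> okA \<tau> Z (tdist D j k) t' (s k))"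
        "alpha (state D t') j = (\<Sum>k\<in>V. if j \<in> PE k then lam (state D (s k)) k else 0)"
        using less.IH[OF _ jV] by blast
      show "\<exists>ts. fst ts \<le> u \<and> u - fst ts \<le> \<tau> \<and> (Z \<longrightarrow> fst ts = u) \<and>
        ahat (state D u) j = alpha (state D (fst ts)) j \<and>
        (\<forall>k\<in>V. j \<in> PE k \<longrightarrow> okA \<tau> Z (tdist D j k) (fst ts) (snd ts k)) \<and>
        alpha (state D (fst ts)) j = (\<Sum>k\<in>V. if j \<in> PE k then lam (state D (snd ts k)) k else 0)"
        by (rule exI[of _ "(t', s)"]) (use t' s in \<open>simp cong: if_cong\<close>)
    qed
    from bchoice[OF ex] obtain TS where TS: "\<forall>j\<in>ch i. fst (TS j) \<le> u \<and> u - fst (TS j) \<le> \<tau> \<and> (Z \<longrightarrow> fst (TS j) = u) \<and>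
        ahat (state D u) j = alpha (state D (fst (TS j))) j \<and>
        (\<forall>k\<in>V. j \<in> PE k \<longrightarrow> okA \<tau> Z (tdist D j k) (fst (TS j)) (snd (TS j) k)) \<and>
        alpha (state D (fst (TS j))) j = (\<Sum>k\<in>V. if j \<in> PE k then lam (state D (snd (TS j) k)) k else 0)"
      by blast
    define S where "S j = snd (TS j)" for j
    define s where "s k = (if k = i then Suc u else S (childOn D i k) k)" for k
    have "alpha (state D t) i = lam (state D (Suc u)) i + (\<Sum>j\<in>ch i. ahat (state D u) j)"
      using alpha_Suc Suc by simp
    also have "(\<Sum>j\<in>ch i. ahat (state D u) j) = (\<Sum>j\<in>ch i. \<Sum>k\<in>V. if j \<in> PE k then lam (state D (S j k)) k else 0)"
      by (rule sum.cong) (use TS in \<open>auto simp: S_def cong: if_cong\<close>)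
    also have "\<dots> = (\<Sum>k\<in>V. \<Sum>j\<in>ch i. if j \<in> PE k then lam (state D (S j k)) k else 0)"
      by (rule sum.swap)
    also have "\<dots> = (\<Sum>k\<in>V. if i \<in> PE k \<and> i \<noteq> k then lam (state D (S (childOn D i k) k)) k else 0)"
    proof (rule sum.cong[OF refl])
      fix k assume "k \<in> V"
      show "(\<Sum>j\<in>ch i. if j \<in> PE k then lam (state D (S j k)) k else 0) =
          (if i \<in> PE k \<and> i \<noteq> k then lam (state D (S (childOn D i k) k)) k else 0)"
        by (rule sum_ch[OF less.prems \<open>k \<in> V\<close>])
    qed
    also have "lam (state D (Suc u)) i + (\<Sum>k\<in>V. if i \<in> PE k \<and> i \<noteq> k then lam (state D (S (childOn D i k) k)) k else 0)
       = (\<Sum>k\<in>V. if i \<in> PE k then lam (state D (s k)) k else 0)"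
    proof -
      have "(\<Sum>k\<in>V. if i \<in> PE k then lam (state D (s k)) k else 0) =
         (\<Sum>k\<in>V. (if k = i then lam (state D (Suc u)) i else 0) +
            (if i \<in> PE k \<and> i \<noteq> k then lam (state D (S (childOn D i k) k)) k else 0))"
        by (rule sum.cong) (auto simp: s_def self_PE)
      also have "\<dots> = lam (state D (Suc u)) i + (\<Sum>k\<in>V. if i \<in> PE k \<and> i \<noteq> k then lam (state D (S (childOn D i k) k)) k else 0)"
        using less.prems by (simp add: sum.distrib)
      finally show ?thesis by simp
    qed
    finally have eq: "alpha (state D t) i = (\<Sum>k\<in>V. if i \<in> PE k then lam (state D (s k)) k else 0)" .
    have ok: "\<forall>k\<in>V. i \<in> PE k \<longrightarrow> okA \<tau> Z (tdist D i k) t (s k)"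
    proof (intro ballI impI)
      fix k assume k: "k \<in> V" "i \<in> PE k"
      show "okA \<tau> Z (tdist D i k) t (s k)"
      proof (cases "k = i")
        case True then show ?thesis by (simp add: s_def D3 okA_zero Suc)
      next
        case False
        let ?c = "childOn D i k"
        have c: "?c \<in> ch i" "?c \<in> PE k" using childOn[OF less.prems k(1) k(2)] False by auto
        have d: "tdist D i k = Suc (tdist D ?c k)" using D1[OF less.prems k(1) c] .
        have T: "fst (TS ?c) \<le> u" "u - fst (TS ?c) \<le> \<tau>" "Z \<longrightarrow> fst (TS ?c) = u"
          "okA \<tau> Z (tdist D ?c k) (fst (TS ?c)) (S ?c k)"
          using TS c k(1) by (auto simp: S_def)
        show ?thesis unfolding d Suc using okA_step[OF T(4) T(1) T(2) T(3)] False by (simp add: s_def)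
      qed
    qed
    show ?thesis using ok eq by blast
  qed
qed

end



lemma sum_minus_if: assumes "finite A"
  shows "sum g (A - {i}) = sum (\<lambda>r. if r = i then 0 else g r) A"
proof -
  have "sum (\<lambda>r. if r = i then 0 else g r) A = sum (\<lambda>r. if r = i then 0 else g r) (A - {i})"
    by (rule sum.mono_neutral_right) (use assms in auto)
  also have "\<dots> = sum g (A - {i})" by (rule sum.cong) auto
  finally show ?thesis by simp
qed

context dl begin

lemma CH: assumes "i \<in> V"
  shows "\<exists>T S. \<forall>j\<in>ch i. T j \<le> t \<and> t - T j \<le> \<tau> \<and> (Z \<longrightarrow> T j = t) \<and>
     (\<forall>k\<in>V. j \<in> PE k \<longrightarrow> okA \<tau> Z (tdist D j k) (T j) (S j k)) \<and>
     ahat (state D t) j = (\<Sum>k\<in>V. if j \<in> PE k then lam (state D (S j k)) k else 0)"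
proof -
  have ex: "\<forall>j\<in>ch i. \<exists>ts. fst ts \<le> t \<and> t - fst ts \<le> \<tau> \<and> (Z \<longrightarrow> fst ts = t) \<and>
     (\<forall>k\<in>V. j \<in> PE k \<longrightarrow> okA \<tau> Z (tdist D j k) (fst ts) (snd ts k)) \<and>
     ahat (state D t) j = (\<Sum>k\<in>V. if j \<in> PE k then lam (state D (snd ts k)) k else 0)"
  proof
    fix j assume j: "j \<in> ch i"
    have jV: "j \<in> V" using j ch_V by blast
    have sj: "sg j \<noteq> 0" using j assms by (simp add: children_def)
    obtain t' where t': "t' \<le> t" "t - t' \<le> \<tau>" "Z \<longrightarrow> t' = t" "ahat (state D t) j = alpha (state D t') j"
      using AH[OF jV sj, of t] by blast
    obtain s where s: "(\<forall>k\<in>V. j \<in> PE k \<longrightarrow> okA \<tau> Z (tdist D j k) t' (s k))"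
      "alpha (state D t') j = (\<Sum>k\<in>V. if j \<in> PE k then lam (state D (s k)) k else 0)"
      using IA[OF jV, of t'] by blast
    show "\<exists>ts. fst ts \<le> t \<and> t - fst ts \<le> \<tau> \<and> (Z \<longrightarrow> fst ts = t) \<and>
     (\<forall>k\<in>V. j \<in> PE k \<longrightarrow> okA \<tau> Z (tdist D j k) (fst ts) (snd ts k)) \<and>
     ahat (state D t) j = (\<Sum>k\<in>V. if j \<in> PE k then lam (state D (snd ts k)) k else 0)"
      by (rule exI[of _ "(t', s)"]) (use t' s in \<open>simp cong: if_cong\<close>)
  qed
  from bchoice[OF ex] obtain TS where TS: "\<forall>j\<in>ch i. fst (TS j) \<le> t \<and> t - fst (TS j) \<le> \<tau> \<and> (Z \<longrightarrow> fst (TS j) = t) \<and>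
     (\<forall>k\<in>V. j \<in> PE k \<longrightarrow> okA \<tau> Z (tdist D j k) (fst (TS j)) (snd (TS j) k)) \<and>
     ahat (state D t) j = (\<Sum>k\<in>V. if j \<in> PE k then lam (state D (snd (TS j) k)) k else 0)"
    by blast
  show ?thesis by (rule exI[of _ "\<lambda>j. fst (TS j)"], rule exI[of _ "\<lambda>j. snd (TS j)"]) (use TS in simp)
qed

lemma CHsum: assumes "i \<in> V"
  and TS: "\<forall>j\<in>ch i. ahat (state D t) j = (\<Sum>k\<in>V. if j \<in> PE k then lam (state D (S j k)) k else 0)"
  shows "(\<Sum>j\<in>ch i - {i0}. ahat (state D t) j) =
     (\<Sum>k\<in>V. if i \<in> PE k \<and> i \<noteq> k \<and> childOn D i k \<noteq> i0 then lam (state D (S (childOn D i k) k)) k else 0)"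
proof -
  have "(\<Sum>j\<in>ch i - {i0}. ahat (state D t) j) = (\<Sum>j\<in>ch i - {i0}. \<Sum>k\<in>V. if j \<in> PE k then lam (state D (S j k)) k else 0)"
    by (rule sum.cong) (use TS in auto)
  also have "\<dots> = (\<Sum>k\<in>V. \<Sum>j\<in>ch i - {i0}. if j \<in> PE k then lam (state D (S j k)) k else 0)"
    by (rule sum.swap)
  also have "\<dots> = (\<Sum>k\<in>V. if i \<in> PE k \<and> i \<noteq> k \<and> childOn D i k \<noteq> i0 then lam (state D (S (childOn D i k) k)) k else 0)"
  proof (rule sum.cong[OF refl])
    fix k assume k: "k \<in> V"
    have "(\<Sum>j\<in>ch i - {i0}. if j \<in> PE k then lam (state D (S j k)) k else 0)
       = (\<Sum>j\<in>ch i. if j = i0 then 0 else (if j \<in> PE k then lam (state D (S j k)) k else 0))"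
      by (rule sum_minus_if[OF finite_ch])
    also have "\<dots> = (\<Sum>j\<in>ch i. if j \<in> PE k then (if j = i0 then 0 else lam (state D (S j k)) k) else 0)"
      by (rule sum.cong) auto
    also have "\<dots> = (if i \<in> PE k \<and> i \<noteq> k then (if childOn D i k = i0 then 0 else lam (state D (S (childOn D i k) k)) k) else 0)"
      by (rule sum_ch[OF assms(1) k])
    finally show "(\<Sum>j\<in>ch i - {i0}. if j \<in> PE k then lam (state D (S j k)) k else 0) =
       (if i \<in> PE k \<and> i \<noteq> k \<and> childOn D i k \<noteq> i0 then lam (state D (S (childOn D i k) k)) k else 0)"
      by simp
  qed
  finally show ?thesis .
qed

lemma CHsum0: assumes "i \<in> V"
  and TS: "\<forall>j\<in>ch i. ahat (state D t) j = (\<Sum>k\<in>V. if j \<in> PE k then lam (state D (S j k)) k else 0)"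
  shows "(\<Sum>j\<in>ch i. ahat (state D t) j) =
     (\<Sum>k\<in>V. if i \<in> PE k \<and> i \<noteq> k then lam (state D (S (childOn D i k) k)) k else 0)"
proof -
  have "ch i - {0} = ch i" by (auto simp: children_def)
  moreover have "\<And>k. k \<in> V \<Longrightarrow> i \<in> PE k \<Longrightarrow> i \<noteq> k \<Longrightarrow> childOn D i k \<noteq> 0"
    using childOn(4)[OF assms(1)] by fastforce
  ultimately have nz: "\<And>k. k \<in> V \<Longrightarrow> (if i \<in> PE k \<and> i \<noteq> k \<and> childOn D i k \<noteq> 0 then lam (state D (S (childOn D i k) k)) k else 0)
      = (if i \<in> PE k \<and> i \<noteq> k then lam (state D (S (childOn D i k) k)) k else 0)" by auto
  have "(\<Sum>j\<in>ch i. ahat (state D t) j) = (\<Sum>j\<in>ch i - {0}. ahat (state D t) j)"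
    using \<open>ch i - {0} = ch i\<close> by simp
  also have "\<dots> = (\<Sum>k\<in>V. if i \<in> PE k \<and> i \<noteq> k \<and> childOn D i k \<noteq> 0 then lam (state D (S (childOn D i k) k)) k else 0)"
    by (rule CHsum[OF assms])
  also have "\<dots> = (\<Sum>k\<in>V. if i \<in> PE k \<and> i \<noteq> k then lam (state D (S (childOn D i k) k)) k else 0)"
    by (rule sum.cong[OF refl]) (rule nz)
  finally show ?thesis .
qed

end



locale gen = dl +
  fixes fw :: "bool \<Rightarrow> nat \<Rightarrow> real" and bt bh zz :: "bool \<Rightarrow> st \<Rightarrow> nat \<Rightarrow> real"
  assumes bt0: "bt c (state D 0) j = 0"
  and bh0: "bh c (state D 0) j = 0"
  and z0: "zz c (state D 0) j = 0"
  and btS: "bt c (state D (Suc u)) j = (if sigma D j \<noteq> 0 then Wt (fw c) D (sigma D j) (sigma D j) *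
      (lam (state D (Suc u)) (sigma D j) + (\<Sum>r\<in>children D (sigma D j) - {j}. ahat (state D u) r))
      + bh c (state D u) (sigma D j) else 0)"
  and bhS: "bh c (state D (Suc u)) j = (if sigma D j \<noteq> 0 then bt c (state D (Suc u - tdn D j u)) j else 0)"
  and zS: "zz c (state D (Suc u)) i = Wt (fw c) D i i * (lam (state D (Suc u)) i +
      (\<Sum>j\<in>children D i. ahat (state D (Suc u)) j)) + bh c (state D (Suc u)) i"
begin

lemma BH: assumes "j \<in> V" "sg j \<noteq> 0"
  shows "\<exists>t'\<le>t. t - t' \<le> \<tau> \<and> (Z \<longrightarrow> t' = t) \<and> (\<forall>c. bh c (state D t) j = bt c (state D t') j)"
proof (cases t)
  case 0 then show ?thesis by (intro exI[of _ 0]) (simp add: bt0 bh0)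
next
  case (Suc u)
  show ?thesis
    by (rule exI[of _ "Suc u - tdn D j u"]) (use dly[OF assms, of u] in \<open>auto simp: Suc bhS assms(2)\<close>)
qed

lemma bh_zero: "sg j = 0 \<Longrightarrow> bh c (state D t) j = 0"
  by (cases t) (simp_all add: bh0 bhS)

definition IB where "IB t \<longleftrightarrow> (\<forall>i\<in>V. sg i \<noteq> 0 \<longrightarrow> (\<exists>s. (\<forall>k\<in>V. i \<notin> PE k \<longrightarrow> okA \<tau> Z (tdist D i k - 1) t (s k)) \<and>
    (\<forall>c. bt c (state D t) i = (\<Sum>k\<in>V. if i \<notin> PE k then Wt (fw c) D i k * lam (state D (s k)) k else 0))))"

definition IHt where "IHt t \<longleftrightarrow> (\<forall>i\<in>V. \<exists>s. (\<forall>k\<in>V. i \<notin> PE k \<longrightarrow> okH \<tau> Z (tdist D i k) t (s k)) \<and>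
    (\<forall>c. bh c (state D t) i = (\<Sum>k\<in>V. if i \<notin> PE k then Wt (fw c) D i k * lam (state D (s k)) k else 0)))"

lemma IHt_of_IB: assumes "\<forall>t'\<le>t. IB t'" shows "IHt t"
  unfolding IHt_def
proof
  fix i assume iV: "i \<in> V"
  show "\<exists>s. (\<forall>k\<in>V. i \<notin> PE k \<longrightarrow> okH \<tau> Z (tdist D i k) t (s k)) \<and>
    (\<forall>c. bh c (state D t) i = (\<Sum>k\<in>V. if i \<notin> PE k then Wt (fw c) D i k * lam (state D (s k)) k else 0))"
  proof (cases "sg i = 0")
    case True
    have ok: "\<forall>k\<in>V. i \<notin> PE k \<longrightarrow> okH \<tau> Z (tdist D i k) t (t - (tdist D i k - 1))"
      using okH_canon D4[OF iV] by blast
    have "\<forall>c. bh c (state D t) i = (\<Sum>k\<in>V. if i \<notin> PE k then Wt (fw c) D i k * lam (state D (t - (tdist D i k - 1))) k else 0)"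
    proof
      fix c
      have "(\<Sum>k\<in>V. if i \<notin> PE k then Wt (fw c) D i k * lam (state D (t - (tdist D i k - 1))) k else 0) = 0"
        by (rule sum.neutral) (use W3[OF iV True] in auto)
      then show "bh c (state D t) i = (\<Sum>k\<in>V. if i \<notin> PE k then Wt (fw c) D i k * lam (state D (t - (tdist D i k - 1))) k else 0)"
        using bh_zero[OF True] by simp
    qed
    then show ?thesis using ok by (intro exI[of _ "\<lambda>k. t - (tdist D i k - 1)"]) simp
  next
    case False
    obtain t' where t': "t' \<le> t" "t - t' \<le> \<tau>" "Z \<longrightarrow> t' = t" "\<forall>c. bh c (state D t) i = bt c (state D t') i"
      using BH[OF iV False, of t] by blast
    obtain s where s: "\<forall>k\<in>V. i \<notin> PE k \<longrightarrow> okA \<tau> Z (tdist D i k - 1) t' (s k)"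
      "\<forall>c. bt c (state D t') i = (\<Sum>k\<in>V. if i \<notin> PE k then Wt (fw c) D i k * lam (state D (s k)) k else 0)"
      using assms t'(1) iV False unfolding IB_def by blast
    have "\<forall>k\<in>V. i \<notin> PE k \<longrightarrow> okH \<tau> Z (tdist D i k) t (s k)"
      using s(1) okH_B D4[OF iV] t'(1,2,3) by blast
    then show ?thesis using s(2) t'(4) by auto
  qed
qed


lemma IB_all: "IB t"
proof (induction t rule: less_induct)
  case (less t)
  show ?case unfolding IB_def
  proof (intro ballI impI)
    fix i assume iV: "i \<in> V" and nz: "sg i \<noteq> 0"
    show "\<exists>s. (\<forall>k\<in>V. i \<notin> PE k \<longrightarrow> okA \<tau> Z (tdist D i k - 1) t (s k)) \<and>
    (\<forall>c. bt c (state D t) i = (\<Sum>k\<in>V. if i \<notin> PE k then Wt (fw c) D i k * lam (state D (s k)) k else 0))"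
    proof (cases t)
      case 0
      have "\<forall>c. (\<Sum>k\<in>V. if i \<notin> PE k then Wt (fw c) D i k * lam (state D 0) k else 0) = 0"
        by (intro allI sum.neutral) (auto simp: st0_simps)
      then show ?thesis using 0 by (intro exI[of _ "\<lambda>_. 0"]) (simp add: okA_0 bt0)
    next
      case (Suc u)
      define p where "p = sg i"
      have pV: "p \<in> V" using par[OF iV] nz p_def by auto
      have ipn: "i \<notin> PE p" using notin_par[OF iV] p_def by simp
      have pi: "p \<in> PE i" using par_in[OF iV] pV p_def by simp
      have ich: "i \<in> ch p" using iV p_def by (simp add: children_def)
      have "\<forall>t'\<le>u. IB t'" using less.IH Suc by simp
      then have "IHt u" by (rule IHt_of_IB)
      then obtain sh where sh: "\<forall>k\<in>V. p \<notin> PE k \<longrightarrow> okH \<tau> Z (tdist D p k) u (sh k)"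
        "\<forall>c. bh c (state D u) p = (\<Sum>k\<in>V. if p \<notin> PE k then Wt (fw c) D p k * lam (state D (sh k)) k else 0)"
        unfolding IHt_def using pV by blast
      obtain T S where TS: "\<forall>j\<in>ch p. T j \<le> u \<and> u - T j \<le> \<tau> \<and> (Z \<longrightarrow> T j = u) \<and>
         (\<forall>k\<in>V. j \<in> PE k \<longrightarrow> okA \<tau> Z (tdist D j k) (T j) (S j k)) \<and>
         ahat (state D u) j = (\<Sum>k\<in>V. if j \<in> PE k then lam (state D (S j k)) k else 0)"
        using CH[OF pV, of u] by blast
      have ahs: "(\<Sum>r\<in>ch p - {i}. ahat (state D u) r) = (\<Sum>k\<in>V. if p \<in> PE k \<and> p \<noteq> k \<and> childOn D p k \<noteq> i
            then lam (state D (S (childOn D p k) k)) k else 0)"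
        by (rule CHsum[OF pV]) (use TS in blast)
      define s where "s k = (if k = p then Suc u else if p \<in> PE k then S (childOn D p k) k else sh k)" for k
      have eq: "\<forall>c. bt c (state D t) i = (\<Sum>k\<in>V. if i \<notin> PE k then Wt (fw c) D i k * lam (state D (s k)) k else 0)"
      proof
        fix c
        let ?W = "Wt (fw c) D"
        let ?X = "\<lambda>k. if p \<in> PE k \<and> p \<noteq> k \<and> childOn D p k \<noteq> i then lam (state D (S (childOn D p k) k)) k else 0"
        let ?Y = "\<lambda>k. if p \<notin> PE k then ?W p k * lam (state D (sh k)) k else 0"
        have "bt c (state D t) i = ?W p p * (lam (state D (Suc u)) p + (\<Sum>r\<in>ch p - {i}. ahat (state D u) r)) + bh c (state D u) p"
          using btS[of c u i] nz Suc p_def by simp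
        also have "\<dots> = ?W p p * lam (state D (Suc u)) p + (\<Sum>k\<in>V. ?W p p * ?X k) + (\<Sum>k\<in>V. ?Y k)"
          unfolding ahs sh(2)[rule_format] by (simp add: algebra_simps sum_distrib_left)
        also have "\<dots> = (\<Sum>k\<in>V. (if k = p then ?W p p * lam (state D (Suc u)) p else 0) + ?W p p * ?X k + ?Y k)"
          using pV by (simp add: sum.distrib)
        also have "\<dots> = (\<Sum>k\<in>V. if i \<notin> PE k then ?W i k * lam (state D (s k)) k else 0)"
        proof (rule sum.cong[OF refl])
          fix k assume k: "k \<in> V"
          show "(if k = p then ?W p p * lam (state D (Suc u)) p else 0) + ?W p p * ?X k + ?Y k =
             (if i \<notin> PE k then ?W i k * lam (state D (s k)) k else 0)"
          proof (cases "k = p")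
            case True
            have "?W i p = ?W p p" using W2[OF iV ipn] p_def by simp
            then show ?thesis using True ipn self_PE[OF pV] by (simp add: s_def)
          next
            case kp: False
            show ?thesis
            proof (cases "p \<in> PE k")
              case pk: True
              let ?c = "childOn D p k"
              have c: "?c \<in> ch p" "?c \<in> PE k" using childOn[OF pV k pk] kp by auto
              show ?thesis
              proof (cases "?c = i")
                case True
                then have "i \<in> PE k" using c by simp
                then show ?thesis using True kp pk by simp
              next
                case False
                have ink: "i \<notin> PE k"
                proof
                  assume "i \<in> PE k"
                  then have "i \<in> ch p \<inter> PE k" using ich by simp
                  then show False using C1[OF pV k] pk kp False by simp
                qed
                have "?W i k = ?W p k" using W2[OF iV ink] p_def by simp
                also have "\<dots> = ?W p p" using W1[OF k pk] .
                finally show ?thesis using False kp pk ink by (simp add: s_def)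
              qed
            next
              case pk: False
              have ink: "i \<notin> PE k"
              proof
                assume "i \<in> PE k"
                then have "PE i \<subseteq> PE k" using anc_sub[OF k] by blast
                then show False using pi pk by blast
              qed
              have "?W i k = ?W p k" using W2[OF iV ink] p_def by simp
              then show ?thesis using kp pk ink by (simp add: s_def)
            qed
          qed
        qed
        finally show "bt c (state D t) i = (\<Sum>k\<in>V. if i \<notin> PE k then ?W i k * lam (state D (s k)) k else 0)" .
      qed
      have ok: "\<forall>k\<in>V. i \<notin> PE k \<longrightarrow> okA \<tau> Z (tdist D i k - 1) t (s k)"
      proof (intro ballI impI)
        fix k assume k: "k \<in> V" and ink: "i \<notin> PE k"
        have d2: "tdist D i k = Suc (tdist D p k)" using D2[OF iV _ k ink] pV p_def by simp
        show "okA \<tau> Z (tdist D i k - 1) t (s k)"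
        proof (cases "k = p")
          case True then show ?thesis using d2 by (simp add: s_def D3 okA_zero Suc)
        next
          case kp: False
          show ?thesis
          proof (cases "p \<in> PE k")
            case pk: True
            let ?c = "childOn D p k"
            have c: "?c \<in> ch p" "?c \<in> PE k" using childOn[OF pV k pk] kp by auto
            have d1: "tdist D p k = Suc (tdist D ?c k)" using D1[OF pV k c] .
            have T: "T ?c \<le> u" "u - T ?c \<le> \<tau>" "Z \<longrightarrow> T ?c = u"
              "okA \<tau> Z (tdist D ?c k) (T ?c) (S ?c k)" using TS c k by auto
            show ?thesis using okA_step[OF T(4) T(1) T(2) T(3)] d2 d1 kp pk by (simp add: s_def Suc)
          next
            case pk: False
            have "okA \<tau> Z (tdist D p k) (Suc u) (sh k)"
              using okB_H sh(1) k pk D4[OF pV pk] by blast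
            then show ?thesis using d2 kp pk by (simp add: s_def Suc)
          qed
        qed
      qed
      show ?thesis using ok eq by blast
    qed
  qed
qed

lemma IZ: assumes iV: "i \<in> V"
  shows "\<exists>s. (\<forall>k\<in>V. okZ \<tau> Z (tdist D i k) t (s k)) \<and>
     (\<forall>c. zz c (state D t) i = (\<Sum>k\<in>V. Wt (fw c) D i k * lam (state D (s k)) k))"
proof (cases t)
  case 0
  then show ?thesis by (intro exI[of _ "\<lambda>_. 0"]) (simp add: okZ_0 z0 st0_simps)
next
  case (Suc u)
  have "IHt (Suc u)" using IB_all IHt_of_IB by blast
  then obtain sh where sh: "\<forall>k\<in>V. i \<notin> PE k \<longrightarrow> okH \<tau> Z (tdist D i k) (Suc u) (sh k)"
    "\<forall>c. bh c (state D (Suc u)) i = (\<Sum>k\<in>V. if i \<notin> PE k then Wt (fw c) D i k * lam (state D (sh k)) k else 0)"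
    unfolding IHt_def using iV by blast
  obtain T S where TS: "\<forall>j\<in>ch i. T j \<le> Suc u \<and> Suc u - T j \<le> \<tau> \<and> (Z \<longrightarrow> T j = Suc u) \<and>
     (\<forall>k\<in>V. j \<in> PE k \<longrightarrow> okA \<tau> Z (tdist D j k) (T j) (S j k)) \<and>
     ahat (state D (Suc u)) j = (\<Sum>k\<in>V. if j \<in> PE k then lam (state D (S j k)) k else 0)"
    using CH[OF iV, of "Suc u"] by blast
  have ahs: "(\<Sum>j\<in>ch i. ahat (state D (Suc u)) j) = (\<Sum>k\<in>V. if i \<in> PE k \<and> i \<noteq> k
        then lam (state D (S (childOn D i k) k)) k else 0)"
    by (rule CHsum0[OF iV]) (use TS in blast)
  define s where "s k = (if i \<notin> PE k then sh k else if k = i then Suc u else S (childOn D i k) k)" for k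
  have eq: "\<forall>c. zz c (state D t) i = (\<Sum>k\<in>V. Wt (fw c) D i k * lam (state D (s k)) k)"
  proof
    fix c
    let ?W = "Wt (fw c) D"
    let ?X = "\<lambda>k. if i \<in> PE k \<and> i \<noteq> k then lam (state D (S (childOn D i k) k)) k else 0"
    let ?Y = "\<lambda>k. if i \<notin> PE k then ?W i k * lam (state D (sh k)) k else 0"
    have "zz c (state D t) i = ?W i i * (lam (state D (Suc u)) i + (\<Sum>j\<in>ch i. ahat (state D (Suc u)) j)) + bh c (state D (Suc u)) i"
      using zS Suc by simp
    also have "\<dots> = ?W i i * lam (state D (Suc u)) i + (\<Sum>k\<in>V. ?W i i * ?X k) + (\<Sum>k\<in>V. ?Y k)"
      unfolding ahs sh(2)[rule_format] by (simp add: algebra_simps sum_distrib_left)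
    also have "\<dots> = (\<Sum>k\<in>V. (if k = i then ?W i i * lam (state D (Suc u)) i else 0) + ?W i i * ?X k + ?Y k)"
      using iV by (simp add: sum.distrib)
    also have "\<dots> = (\<Sum>k\<in>V. ?W i k * lam (state D (s k)) k)"
    proof (rule sum.cong[OF refl])
      fix k assume k: "k \<in> V"
      show "(if k = i then ?W i i * lam (state D (Suc u)) i else 0) + ?W i i * ?X k + ?Y k =
         ?W i k * lam (state D (s k)) k"
      proof (cases "i \<in> PE k")
        case False
        then have "k \<noteq> i" using self_PE[OF iV] by auto
        then show ?thesis using False by (simp add: s_def)
      next
        case True
        show ?thesis
        proof (cases "k = i")
          case True then show ?thesis using self_PE[OF iV] by (simp add: s_def)
        next
          case False
          have "?W i k = ?W i i" using W1[OF k \<open>i \<in> PE k\<close>] .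
          then show ?thesis using False True by (simp add: s_def)
        qed
      qed
    qed
    finally show "zz c (state D t) i = (\<Sum>k\<in>V. ?W i k * lam (state D (s k)) k)" .
  qed
  have ok: "\<forall>k\<in>V. okZ \<tau> Z (tdist D i k) t (s k)"
  proof
    fix k assume k: "k \<in> V"
    show "okZ \<tau> Z (tdist D i k) t (s k)"
    proof (cases "i \<in> PE k")
      case False
      then show ?thesis using okZ_H sh(1) k Suc by (simp add: s_def)
    next
      case True
      show ?thesis
      proof (cases "k = i")
        case True then show ?thesis using self_PE[OF iV] by (simp add: s_def D3 okZ_zero Suc)
      next
        case False
        let ?c = "childOn D i k"
        have c: "?c \<in> ch i" "?c \<in> PE k" using childOn[OF iV k \<open>i \<in> PE k\<close>] False by auto
        have d1: "tdist D i k = Suc (tdist D ?c k)" using D1[OF iV k c] .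
        have T: "T ?c \<le> Suc u" "Suc u - T ?c \<le> \<tau>" "Z \<longrightarrow> T ?c = Suc u"
          "okA \<tau> Z (tdist D ?c k) (T ?c) (S ?c k)" using TS c k by auto
        show ?thesis using okZ_A[OF T(4) T(1) T(2) T(3)] d1 False True by (simp add: s_def Suc)
      qed
    qed
  qed
  show ?thesis using ok eq by blast
qed

end



theorem lemma2:
  fixes D :: prob
  assumes tree: "is_tree (nodes D) (sigma D)"
    and lines: "\<forall>k\<in>{1..nodes D}. rr D k \<ge> 0 \<and> xx D k \<ge> 0"
    and data: "\<forall>i\<in>{1..nodes D}. vlo D i \<le> vhi D i \<and> plo D i \<le> phi D i \<and> qlo D i \<le> qhi D i
                  \<and> aP D i > 0 \<and> aQ D i > 0"
    and gam: "gam D > 0"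
  shows
   "((\<forall>j\<in>{1..nodes D}. sigma D j \<noteq> 0 \<longrightarrow> (\<forall>t. tup D j t = 0 \<and> tdn D j t = 0)) \<longrightarrow>
      (\<forall>i\<in>{1..nodes D}. \<forall>t.
         zP (state D t) i = (\<Sum>j=1..nodes D. Rm D i j * lam (state D (t - dd D i j)) j) \<and>
         zQ (state D t) i = (\<Sum>j=1..nodes D. Xm D i j * lam (state D (t - dd D i j)) j)))
    \<and> (\<forall>tmax::nat.
       (\<forall>j\<in>{1..nodes D}. sigma D j \<noteq> 0 \<longrightarrow> (\<forall>t. tup D j t \<le> tmax \<and> tdn D j t \<le> tmax)) \<longrightarrow>
       (\<forall>i\<in>{1..nodes D}. \<forall>t. \<exists>tb :: nat \<Rightarrow> nat.
          (\<forall>j\<in>{1..nodes D}. tb j \<le> (tmax + 1) * diam D) \<and>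
          zP (state D t) i = (\<Sum>j=1..nodes D. Rm D i j * lam (state D (t - tb j)) j) \<and>
          zQ (state D t) i = (\<Sum>j=1..nodes D. Xm D i j * lam (state D (t - tb j)) j)))"
  proof -
  define fw where "fw c = (if c then rr D else xx D)" for c
  define bt where "bt c s j = (if c then betaP s j else betaQ s j)" for c and s :: st and j
  define bh where "bh c s j = (if c then bPhat s j else bQhat s j)" for c and s :: st and j
  define zz where "zz c s j = (if c then zP s j else zQ s j)" for c and s :: st and j
  have G: "gen D \<tau> Z fw bt bh zz"
    if dl: "\<And>j t. j \<in> {1..nodes D} \<Longrightarrow> sigma D j \<noteq> 0 \<Longrightarrow>
       tup D j t \<le> \<tau> \<and> tdn D j t \<le> \<tau> \<and> (Z \<longrightarrow> tup D j t = 0 \<and> tdn D j t = 0)" for \<tau> Z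
  proof -
    interpret dl D \<tau> Z by unfold_locales (use tree dl in auto)
    show ?thesis
      by unfold_locales (auto simp: fw_def bt_def bh_def zz_def st0_simps betaP_Suc betaQ_Suc
          bPhat_Suc bQhat_Suc zP_Suc zQ_Suc Rm_Wt Xm_Wt)
  qed
  have tr: "tr D" by unfold_locales (rule tree)
  show ?thesis
  proof (intro conjI impI allI ballI)
    assume H: "\<forall>j\<in>{1..nodes D}. sigma D j \<noteq> 0 \<longrightarrow> (\<forall>t. tup D j t = 0 \<and> tdn D j t = 0)"
    have g: "gen D 0 True fw bt bh zz" by (rule G) (use H in auto)
    fix i t assume iV: "i \<in> {1..nodes D}"
    obtain s where s: "\<forall>k\<in>{1..nodes D}. okZ 0 True (tdist D i k) t (s k)"
      "\<forall>c. zz c (state D t) i = (\<Sum>k\<in>{1..nodes D}. Wt (fw c) D i k * lam (state D (s k)) k)"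
      using gen.IZ[OF g iV, of t] by blast
    have sk: "\<And>k. k \<in> {1..nodes D} \<Longrightarrow> s k = t - dd D i k"
      using s(1) by (auto simp: okZ_def dd_def)
    have P: "zP (state D t) i = (\<Sum>k\<in>{1..nodes D}. Wt (rr D) D i k * lam (state D (s k)) k)"
      using s(2)[rule_format, of True] by (simp add: zz_def fw_def)
    have Q: "zQ (state D t) i = (\<Sum>k\<in>{1..nodes D}. Wt (xx D) D i k * lam (state D (s k)) k)"
      using s(2)[rule_format, of False] by (simp add: zz_def fw_def)
    show "zP (state D t) i = (\<Sum>j = 1..nodes D. Rm D i j * lam (state D (t - dd D i j)) j)"
      unfolding P Rm_Wt by (rule sum.cong[OF refl]) (simp add: sk)
    show "zQ (state D t) i = (\<Sum>j = 1..nodes D. Xm D i j * lam (state D (t - dd D i j)) j)"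
      unfolding Q Xm_Wt by (rule sum.cong[OF refl]) (simp add: sk)
  next
    fix tmax :: nat and i t
    assume H: "\<forall>j\<in>{1..nodes D}. sigma D j \<noteq> 0 \<longrightarrow> (\<forall>t. tup D j t \<le> tmax \<and> tdn D j t \<le> tmax)"
      and iV: "i \<in> {1..nodes D}"
    have g: "gen D tmax False fw bt bh zz" by (rule G) (use H in auto)
    obtain s where s: "\<forall>k\<in>{1..nodes D}. okZ tmax False (tdist D i k) t (s k)"
      "\<forall>c. zz c (state D t) i = (\<Sum>k\<in>{1..nodes D}. Wt (fw c) D i k * lam (state D (s k)) k)"
      using gen.IZ[OF g iV, of t] by blast
    have sk: "\<And>k. k \<in> {1..nodes D} \<Longrightarrow> t - (t - s k) = s k"
      using s(1) by (auto simp: okZ_def)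
    have bd: "\<forall>j\<in>{1..nodes D}. t - s j \<le> (tmax + 1) * diam D"
    proof
      fix j assume j: "j \<in> {1..nodes D}"
      have "t - s j \<le> (tmax + 1) * tdist D i j" using s(1) j by (auto simp: okZ_def)
      also have "\<dots> \<le> (tmax + 1) * diam D" using tr.D5[OF tr iV j] by (rule mult_le_mono2)
      finally show "t - s j \<le> (tmax + 1) * diam D" .
    qed
    have P: "zP (state D t) i = (\<Sum>k\<in>{1..nodes D}. Wt (rr D) D i k * lam (state D (s k)) k)"
      using s(2)[rule_format, of True] by (simp add: zz_def fw_def)
    have Q: "zQ (state D t) i = (\<Sum>k\<in>{1..nodes D}. Wt (xx D) D i k * lam (state D (s k)) k)"
      using s(2)[rule_format, of False] by (simp add: zz_def fw_def)
    show "\<exists>tb :: nat \<Rightarrow> nat.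
          (\<forall>j\<in>{1..nodes D}. tb j \<le> (tmax + 1) * diam D) \<and>
          zP (state D t) i = (\<Sum>j=1..nodes D. Rm D i j * lam (state D (t - tb j)) j) \<and>
          zQ (state D t) i = (\<Sum>j=1..nodes D. Xm D i j * lam (state D (t - tb j)) j)"
    proof (intro exI[of _ "\<lambda>k. t - s k"] conjI)
      show "\<forall>j\<in>{1..nodes D}. t - s j \<le> (tmax + 1) * diam D" by (rule bd)
      show "zP (state D t) i = (\<Sum>j=1..nodes D. Rm D i j * lam (state D (t - (t - s j))) j)"
        unfolding P Rm_Wt by (rule sum.cong[OF refl]) (simp add: sk)
      show "zQ (state D t) i = (\<Sum>j=1..nodes D. Xm D i j * lam (state D (t - (t - s j))) j)"
        unfolding Q Xm_Wt by (rule sum.cong[OF refl]) (simp add: sk)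
    qed
  qed
qed

end
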